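(* Let $m \ge 1$ and $n_c \ge 5$ be integers, let $\mathcal G_m^{n_c}=(\mathcal V,\mathcal E)$ be the 1D honeycomb network defined in the context, and let $c>0$. Consider the Kuramoto model $$\dot\theta_i=\omega_i+\sum_{j=1}^n a_{ij}\sin(\theta_j-\theta_i),\qquad i\in\mathcal V,$$ with $a_{ij}=a_{ji}=c$ for every edge $(i,j)\in\mathcal E$, $a_{ij}=0$ otherwise, and identical natural frequencies $\omega_i=\omega_j$ for all $i,j\in\mathcal V$. Consider the phase configurations $\theta=(\theta_1,\dots,\theta_n)\in(\mathbb R/2\pi\mathbb Z)^n$ satisfying: (C1) for every edge $(i,j)\in\mathcal E$ there is $k\in\mathbb Z$ with $|k|\le \lceil n_c/4\rceil-1$ and $\theta_i-\theta_j\equiv \frac{2\pi k}{n_c}\pmod{2\pi}$; and (C2) for every $p\in\{0,\dots,m-1\}$ and all $i,j\in\{p(n_c-1)+1,\dots,(p+1)(n_c-1)\}$, $\theta_i-\theta_{i+1}\equiv\theta_j-\theta_{j+1}\pmod{2\pi}$. Then, modulo a common rotation of all phases, there are exactly $(2\lceil n_c/4\rceil-1)^m$ configurations satisfying (C1) and (C2); each of them is a phase-locked configuration of the model, and each is locally exponentially stable (modulo the one-dimensional rotational symmetry, i.e. the Jacobian at the configuration has a simple zero eigenvalue in the direction $(1,\dots,1)$ and all other eigenvalues negative).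
   Context: The 1D honeycomb network $\mathcal G_m^{n_c}$ with $m$ cycles of $n_c$ nodes each is the undirected graph with vertex set $\mathcal V=\{1,2,\dots,m(n_c-1)+1\}$ (so $n=m(n_c-1)+1$) and edge set $\mathcal E=\mathcal E_1\cup\mathcal E_2$, where $\mathcal E_1=\{(i,i+1): 1\le i\le m(n_c-1)\}$ and $\mathcal E_2=\{(i,i+n_c-1): i=p(n_c-1)+1,\ p=0,1,\dots,m-1\}$. Thus for each $p$ the nodes $p(n_c-1)+1,\dots,(p+1)(n_c-1)+1$ form a cycle of length $n_c$, and consecutive cycles share exactly one node and no edge. A phase-locked configuration is a solution in which all phase velocities $\dot\theta_i$ are equal for all times; equivalently, in the frame rotating at the common natural frequency, it is an equilibrium of the dynamics. $\lceil\cdot\rceil$ denotes the ceiling function. *)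

theory Defs
  imports Complex_Main "Jordan_Normal_Form.Char_Poly"
begin

text \<open>1D honeycomb network with m cycles of nc nodes; vertices 1..n.\<close>

definition hc_n :: "nat \<Rightarrow> nat \<Rightarrow> nat" where
  "hc_n m nc = m * (nc - 1) + 1"

definition hc_V :: "nat \<Rightarrow> nat \<Rightarrow> nat set" where
  "hc_V m nc = {1 .. hc_n m nc}"

definition hc_edge :: "nat \<Rightarrow> nat \<Rightarrow> nat \<Rightarrow> nat \<Rightarrow> bool" where
  "hc_edge m nc i j \<longleftrightarrow>
     (1 \<le> i \<and> i \<le> m * (nc - 1) \<and> j = i + 1) \<or>
     (\<exists>p<m. i = p * (nc - 1) + 1 \<and> j = i + nc - 1)"

definition hc_adj :: "nat \<Rightarrow> nat \<Rightarrow> real \<Rightarrow> nat \<Rightarrow> nat \<Rightarrow> real" where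
  "hc_adj m nc c i j = (if hc_edge m nc i j \<or> hc_edge m nc j i then c else 0)"

definition kuramoto_rhs ::
  "nat \<Rightarrow> nat \<Rightarrow> real \<Rightarrow> (nat \<Rightarrow> real) \<Rightarrow> (nat \<Rightarrow> real) \<Rightarrow> nat \<Rightarrow> real" where
  "kuramoto_rhs m nc c \<omega> \<theta> i =
     \<omega> i + (\<Sum>j = 1 .. hc_n m nc. hc_adj m nc c i j * sin (\<theta> j - \<theta> i))"

definition phase_locked ::
  "nat \<Rightarrow> nat \<Rightarrow> real \<Rightarrow> (nat \<Rightarrow> real) \<Rightarrow> (nat \<Rightarrow> real) \<Rightarrow> bool" where
  "phase_locked m nc c \<omega> \<theta> \<longleftrightarrow>
     (\<forall>i \<in> hc_V m nc. \<forall>j \<in> hc_V m nc.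
        kuramoto_rhs m nc c \<omega> \<theta> i = kuramoto_rhs m nc c \<omega> \<theta> j)"

definition cong_2pi :: "real \<Rightarrow> real \<Rightarrow> bool" where
  "cong_2pi x y \<longleftrightarrow> (\<exists>k::int. x - y = 2 * pi * of_int k)"

definition cond_C1 :: "nat \<Rightarrow> nat \<Rightarrow> (nat \<Rightarrow> real) \<Rightarrow> bool" where
  "cond_C1 m nc \<theta> \<longleftrightarrow>
     (\<forall>i j. hc_edge m nc i j \<longrightarrow>
        (\<exists>k::int. \<bar>k\<bar> \<le> \<lceil>real nc / 4\<rceil> - 1 \<and>
                  cong_2pi (\<theta> i - \<theta> j) (2 * pi * of_int k / real nc)))"

definition cond_C2 :: "nat \<Rightarrow> nat \<Rightarrow> (nat \<Rightarrow> real) \<Rightarrow> bool" where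
  "cond_C2 m nc \<theta> \<longleftrightarrow>
     (\<forall>p<m. \<forall>i \<in> {p * (nc - 1) + 1 .. (p + 1) * (nc - 1)}.
        \<forall>j \<in> {p * (nc - 1) + 1 .. (p + 1) * (nc - 1)}.
          cong_2pi (\<theta> i - \<theta> (i + 1)) (\<theta> j - \<theta> (j + 1)))"

definition hc_configs :: "nat \<Rightarrow> nat \<Rightarrow> (nat \<Rightarrow> real) set" where
  "hc_configs m nc = {\<theta>. cond_C1 m nc \<theta> \<and> cond_C2 m nc \<theta>}"

definition rot_rel :: "nat \<Rightarrow> nat \<Rightarrow> ((nat \<Rightarrow> real) \<times> (nat \<Rightarrow> real)) set" where
  "rot_rel m nc = {(\<theta>, \<phi>). \<exists>r::real. \<forall>i \<in> hc_V m nc. cong_2pi (\<theta> i) (\<phi> i + r)}"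

text \<open>Jacobian of the Kuramoto vector field at \<theta> (row/column index i-1 for vertex i).\<close>
definition kuramoto_jac :: "nat \<Rightarrow> nat \<Rightarrow> real \<Rightarrow> (nat \<Rightarrow> real) \<Rightarrow> real mat" where
  "kuramoto_jac m nc c \<theta> = mat (hc_n m nc) (hc_n m nc) (\<lambda>(i, j).
     if i = j then - (\<Sum>k = 1 .. hc_n m nc. hc_adj m nc c (i + 1) k * cos (\<theta> k - \<theta> (i + 1)))
     else hc_adj m nc c (i + 1) (j + 1) * cos (\<theta> (j + 1) - \<theta> (i + 1)))"

end

theory Submission
  imports Defs "Jordan_Normal_Form.Jordan_Normal_Form_Uniqueness" "Jordan_Normal_Form.Jordan_Normal_Form_Existence"
begin

hide_const (open) Coset.order

definition lapm :: "nat \<Rightarrow> (nat \<Rightarrow> nat \<Rightarrow> real) \<Rightarrow> real mat" where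
 "lapm n W = mat n n (\<lambda>(i,j). if i = j then - (\<Sum>k<n. W i k) else W i j)"

lemma sum_if_eq:
  fixes b :: "nat \<Rightarrow> 'a::ab_group_add"
  assumes "i < n"
  shows "(\<Sum>j<n. if i = j then a else b j) = (\<Sum>j<n. b j) - b i + a"
proof -
  have "(\<Sum>j<n. if i = j then a else b j) = (\<Sum>j<n. b j + (if i = j then a - b i else 0))"
    by (rule sum.cong) auto
  also have "\<dots> = (\<Sum>j<n. b j) + (a - b i)" using assms by (simp add: sum.distrib)
  finally show ?thesis by simp
qed

lemma lap_mult_vec:
  assumes v: "v \<in> carrier_vec n" and i: "i < n" and d0: "W i i = 0"
  shows "(map_mat complex_of_real (lapm n W) *\<^sub>v v) $ i = (\<Sum>j<n. of_real (W i j) * (v$j - v$i))"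
proof -
  have "(map_mat complex_of_real (lapm n W) *\<^sub>v v) $ i
     = (\<Sum>j<n. (if i = j then - of_real (\<Sum>k<n. W i k) * v$i else of_real (W i j) * v$j))"
    using v i unfolding lapm_def mult_mat_vec_def scalar_prod_def
    by (auto simp: lessThan_atLeast0 intro!: sum.cong)
  also have "\<dots> = (\<Sum>j<n. of_real (W i j) * v$j) - of_real (W i i) * v$i - of_real (\<Sum>k<n. W i k) * v$i"
    using i by (subst sum_if_eq) auto
  also have "\<dots> = (\<Sum>j<n. of_real (W i j) * (v$j - v$i))"
    using d0 by (simp add: algebra_simps sum_subtractf sum_distrib_left)
  finally show ?thesis .
qed

lemma lap_quad:
  assumes v: "v \<in> carrier_vec n"
    and sym: "\<And>i j. i<n \<Longrightarrow> j<n \<Longrightarrow> W i j = W j i"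
    and d0: "\<And>i. i<n \<Longrightarrow> W i i = 0"
  shows "(\<Sum>i<n. cnj (v$i) * (map_mat complex_of_real (lapm n W) *\<^sub>v v) $ i)
     = - of_real ((\<Sum>i<n. \<Sum>j<n. W i j * (cmod (v$i - v$j))^2) / 2)"
proof -
  define S where "S = (\<Sum>i<n. \<Sum>j<n. of_real (W i j) * (cnj (v$i) * (v$j - v$i)))"
  have L: "(\<Sum>i<n. cnj (v$i) * (map_mat complex_of_real (lapm n W) *\<^sub>v v) $ i) = S"
    unfolding S_def
    by (rule sum.cong, simp, simp add: lap_mult_vec[OF v _ d0] sum_distrib_left algebra_simps)
  have S2: "S = (\<Sum>i<n. \<Sum>j<n. of_real (W i j) * (cnj (v$j) * (v$i - v$j)))"
    unfolding S_def by (subst sum.swap, rule sum.cong, simp, rule sum.cong, simp, simp add: sym)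
  have "2 * S = (\<Sum>i<n. \<Sum>j<n. of_real (W i j) * (cnj (v$i) * (v$j - v$i)) + of_real (W i j) * (cnj (v$j) * (v$i - v$j)))"
    by (subst mult_2, subst S2[symmetric, THEN arg_cong[where f="\<lambda>x. S + x"], symmetric]) (simp add: S_def sum.distrib)
  also have "\<dots> = (\<Sum>i<n. \<Sum>j<n. - of_real (W i j * (cmod (v$i - v$j))^2))"
  proof (rule sum.cong, simp, rule sum.cong, simp)
    fix i j
    have cz: "cnj z * z = of_real ((cmod z)^2)" for z
      by (metis complex_norm_square mult.commute)
    have "cnj (v$i - v$j) * (v$i - v$j) = of_real ((cmod (v$i - v$j))^2)"
      by (rule cz)
    then show "of_real (W i j) * (cnj (v$i) * (v$j - v$i)) + of_real (W i j) * (cnj (v$j) * (v$i - v$j))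
       = - of_real (W i j * (cmod (v$i - v$j))^2)"
    proof -
      have "of_real (W i j) * (cnj (v$i) * (v$j - v$i)) + of_real (W i j) * (cnj (v$j) * (v$i - v$j))
         = - (of_real (W i j) * (cnj (v$i - v$j) * (v$i - v$j)))" by (simp add: algebra_simps)
      also have "\<dots> = - of_real (W i j * (cmod (v$i - v$j))^2)" by (simp only: cz of_real_mult)
      finally show ?thesis .
    qed
  qed
  finally have "2 * S = - of_real (\<Sum>i<n. \<Sum>j<n. W i j * (cmod (v$i - v$j))^2)"
    by (simp add: sum_negf)
  then show ?thesis using L by (simp add: field_simps)
qed

lemma lap_eigen:
  assumes sym: "\<And>i j. i<n \<Longrightarrow> j<n \<Longrightarrow> W i j = W j i"
    and d0: "\<And>i. i<n \<Longrightarrow> W i i = 0"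
    and nonneg: "\<And>i j. i<n \<Longrightarrow> j<n \<Longrightarrow> W i j \<ge> 0"
    and ev: "eigenvalue (map_mat complex_of_real (lapm n W)) e"
  shows "e = 0 \<or> (Im e = 0 \<and> Re e < 0)"
proof -
  from ev obtain v where v: "v \<in> carrier_vec n" "v \<noteq> 0\<^sub>v n"
      and Av: "map_mat complex_of_real (lapm n W) *\<^sub>v v = e \<cdot>\<^sub>v v"
    unfolding eigenvalue_def eigenvector_def by (auto simp: lapm_def)
  define Q where "Q = (\<Sum>i<n. \<Sum>j<n. W i j * (cmod (v$i - v$j))^2)"
  define N where "N = (\<Sum>i<n. (cmod (v$i))^2)"
  have Q0: "Q \<ge> 0" unfolding Q_def using nonneg by (auto intro!: sum_nonneg)
  obtain i0 where i0: "i0 < n" "v $ i0 \<noteq> 0"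
    using v by (metis eq_vecI carrier_vecD index_zero_vec)
  have "N \<ge> (cmod (v$i0))^2" unfolding N_def
    by (rule member_le_sum) (use i0 in auto)
  with i0 have N0: "N > 0" by (smt (verit) norm_eq_zero zero_less_power2)
  have "(\<Sum>i<n. cnj (v$i) * (map_mat complex_of_real (lapm n W) *\<^sub>v v) $ i)
     = (\<Sum>i<n. e * of_real ((cmod (v$i))^2))"
  proof (rule sum.cong, simp)
    fix i assume "i \<in> {..<n}"
    then have "(map_mat complex_of_real (lapm n W) *\<^sub>v v) $ i = e * v $ i" using v Av by simp
    moreover have "cnj (v$i) * v$i = of_real ((cmod (v$i))^2)"
      by (metis complex_norm_square mult.commute)
    ultimately show "cnj (v$i) * (map_mat complex_of_real (lapm n W) *\<^sub>v v) $ i = e * of_real ((cmod (v$i))^2)"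
      by (metis mult.left_commute)
  qed
  also have "\<dots> = e * of_real N" unfolding N_def by (simp add: sum_distrib_left)
  finally have "e * of_real N = - of_real (Q / 2)"
    using lap_quad[OF v(1) sym d0] unfolding Q_def by simp
  then have e: "e = of_real (- Q / (2 * N))" using N0
    by (simp add: field_simps)
  show ?thesis
  proof (cases "Q = 0")
    case True then show ?thesis using e by simp
  next
    case False then have "Q > 0" using Q0 by simp
    then show ?thesis using e N0 by (simp add: divide_pos_pos)
  qed
qed

lemma lap_kernel:
  assumes sym: "\<And>i j. i<n \<Longrightarrow> j<n \<Longrightarrow> W i j = W j i"
    and d0: "\<And>i. i<n \<Longrightarrow> W i i = 0"
    and nonneg: "\<And>i j. i<n \<Longrightarrow> j<n \<Longrightarrow> W i j \<ge> 0"
    and conn: "\<And>i. Suc i < n \<Longrightarrow> W i (Suc i) > 0"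
    and v: "v \<in> carrier_vec n"
    and Av: "map_mat complex_of_real (lapm n W) *\<^sub>v v = 0\<^sub>v n"
  shows "v = (v $ 0) \<cdot>\<^sub>v vec n (\<lambda>_. 1)"
proof -
  define Q where "Q = (\<Sum>i<n. \<Sum>j<n. W i j * (cmod (v$i - v$j))^2)"
  have "(\<Sum>i<n. cnj (v$i) * (map_mat complex_of_real (lapm n W) *\<^sub>v v) $ i) = 0"
    using Av by simp
  moreover have "(\<Sum>i<n. cnj (v$i) * (map_mat complex_of_real (lapm n W) *\<^sub>v v) $ i) = - of_real (Q / 2)"
    unfolding Q_def by (rule lap_quad[OF v]) (simp_all add: assms(1,2))
  ultimately have "Q = 0" by simp
  have fnn: "\<forall>i\<in>{..<n}. 0 \<le> (\<Sum>j<n. W i j * (cmod (v$i - v$j))^2)"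
    by (auto intro!: sum_nonneg simp: nonneg)
  then have z1: "\<forall>i\<in>{..<n}. (\<Sum>j<n. W i j * (cmod (v$i - v$j))^2) = 0"
    using \<open>Q = 0\<close> sum_nonneg_eq_0_iff[OF finite_lessThan fnn[rule_format]] by (simp add: Q_def)
  have z: "W i j * (cmod (v$i - v$j))^2 = 0" if "i < n" "j < n" for i j
  proof -
    have h: "\<forall>j\<in>{..<n}. 0 \<le> W i j * (cmod (v$i - v$j))^2" using that by (auto simp: nonneg)
    have "(\<Sum>j<n. W i j * (cmod (v$i - v$j))^2) = 0" using z1 that by simp
    then have "\<forall>x\<in>{..<n}. W i x * (cmod (v$i - v$x))^2 = 0"
      using sum_nonneg_eq_0_iff[of "{..<n}" "\<lambda>j. W i j * (cmod (v$i - v$j))^2"] h by blast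
    then show ?thesis using that by blast
  qed
  have step: "v $ i = v $ Suc i" if "Suc i < n" for i
    using z[of i "Suc i"] conn[OF that] that by auto
  have all0: "v $ i = v $ 0" if "i < n" for i
    using that by (induction i) (auto simp: step)
  have dv: "dim_vec v = n" using v by simp
  show ?thesis
  proof (rule eq_vecI)
    fix i assume "i < dim_vec ((v $ 0) \<cdot>\<^sub>v vec n (\<lambda>_. 1))"
    then have i: "i < n" by simp
    show "v $ i = ((v $ 0) \<cdot>\<^sub>v vec n (\<lambda>_. 1)) $ i" using i all0[OF i] by simp
  qed (simp add: dv)
qed

lemma sym_sq_kernel:
  fixes A :: "real mat"
  assumes A: "A \<in> carrier_mat n n" and sym: "\<And>i j. i<n \<Longrightarrow> j<n \<Longrightarrow> A$$(i,j) = A$$(j,i)"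
   and v: "v \<in> carrier_vec n"
   and z: "map_mat complex_of_real A *\<^sub>v (map_mat complex_of_real A *\<^sub>v v) = 0\<^sub>v n"
  shows "map_mat complex_of_real A *\<^sub>v v = 0\<^sub>v n"
proof -
  define B where "B = map_mat complex_of_real A"
  define u where "u = B *\<^sub>v v"
  have B: "B \<in> carrier_mat n n" using A unfolding B_def by simp
  have u: "u \<in> carrier_vec n" using B v unfolding u_def by simp
  have ui: "u $ i = (\<Sum>j<n. B $$ (i,j) * v $ j)" if "i < n" for i
    using that B v unfolding u_def by (auto simp: mult_mat_vec_def scalar_prod_def lessThan_atLeast0)
  have Bu: "(B *\<^sub>v u) $ j = (\<Sum>i<n. B $$ (j,i) * u $ i)" if "j < n" for j
    using that B u by (auto simp: mult_mat_vec_def scalar_prod_def lessThan_atLeast0)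
  have Bs: "B $$ (i,j) = B $$ (j,i)" "cnj (B $$ (i,j)) = B $$ (i,j)" if "i<n" "j<n" for i j
    using that A sym unfolding B_def by auto
  have "(\<Sum>i<n. cnj (u$i) * u$i) = (\<Sum>i<n. \<Sum>j<n. B $$ (i,j) * cnj (v $ j) * u$i)"
    by (rule sum.cong, simp) (simp add: ui sum_distrib_right Bs)
  also have "\<dots> = (\<Sum>j<n. cnj (v $ j) * (\<Sum>i<n. B $$ (j,i) * u$i))"
    by (subst sum.swap) (auto intro!: sum.cong simp: sum_distrib_left Bs)
  also have "\<dots> = 0"
  proof -
    have "(\<Sum>i<n. B $$ (j,i) * u$i) = 0" if "j < n" for j
      using Bu[OF that] z[folded B_def u_def] that by (metis index_zero_vec(1))
    then show ?thesis by simp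
  qed
  finally have s0: "(\<Sum>i<n. cnj (u$i) * u$i) = 0" .
  have cz: "cnj z * z = of_real ((cmod z)^2)" for z
    by (metis complex_norm_square mult.commute)
  have "complex_of_real (\<Sum>i<n. (cmod (u$i))^2) = (\<Sum>i<n. cnj (u$i) * u$i)"
    by (simp add: cz)
  then have "(\<Sum>i<n. (cmod (u$i))^2) = 0"
    using s0 of_real_eq_0_iff by metis
  then have "\<forall>i\<in>{..<n}. (cmod (u$i))^2 = 0"
    by (subst (asm) sum_nonneg_eq_0_iff) auto
  then show ?thesis using u unfolding u_def[symmetric] B_def[symmetric]
    by (intro eq_vecI) auto
qed

lemma list_min_eq:
  fixes ds :: "nat list"
  assumes "\<forall>d\<in>set ds. d > 0" and "sum_list (map (min 2) ds) = sum_list (map (min 1) ds)"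
  shows "sum_list ds = sum_list (map (min 1) ds)"
  using assms
proof (induction ds)
  case (Cons d ds)
  have le: "sum_list (map (min 1) ds) \<le> sum_list (map (min 2) ds)"
    by (induction ds) auto
  from Cons.prems have "d = 1" using le by (cases "d = 1") auto
  with Cons show ?case using le by auto
qed simp

lemma kernel_dim_cong:
  fixes A B :: "'a::field mat"
  assumes "dim_col A = dim_col B" "mat_kernel A = mat_kernel B"
  shows "kernel_dim A = kernel_dim B"
  unfolding kernel_dim_def using assms by simp

lemma order_zero_one:
  fixes A :: "complex mat"
  assumes A: "A \<in> carrier_mat n n"
   and k2: "\<And>v. v \<in> carrier_vec n \<Longrightarrow> A *\<^sub>v (A *\<^sub>v v) = 0\<^sub>v n \<Longrightarrow> A *\<^sub>v v = 0\<^sub>v n"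
   and k1: "\<And>v. v \<in> carrier_vec n \<Longrightarrow> A *\<^sub>v v = 0\<^sub>v n \<Longrightarrow> \<exists>a. v = a \<cdot>\<^sub>v w"
   and w: "w \<in> carrier_vec n" "w \<noteq> 0\<^sub>v n" "A *\<^sub>v w = 0\<^sub>v n"
  shows "order 0 (char_poly A) = 1"
proof -
  from char_poly_factorized[OF A] obtain as where "char_poly A = (\<Prod>a\<leftarrow>as. [:- a, 1:])" by blast
  from jordan_nf_exists[OF A this] obtain n_as where jnf: "jordan_nf A n_as" ..
  have cm: "char_matrix A 0 = A" unfolding char_matrix_def using A by (intro eq_matI) simp_all
  have p1: "A ^\<^sub>m 1 = A" using A by simp
  have p2: "A ^\<^sub>m 2 = A * A" using A by (simp add: numeral_2_eq_2)
  have AA: "A * A \<in> carrier_mat n n" using A by simp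
  have Az: "A *\<^sub>v 0\<^sub>v n = 0\<^sub>v n" using A by (intro eq_vecI) auto
  have ker: "mat_kernel (A * A) = mat_kernel A"
  proof (rule equalityI; rule subsetI)
    fix v assume "v \<in> mat_kernel (A * A)"
    then have v: "v \<in> carrier_vec n" "(A * A) *\<^sub>v v = 0\<^sub>v n" using mat_kernelD[OF AA] by auto
    have "A *\<^sub>v (A *\<^sub>v v) = 0\<^sub>v n" using v assoc_mult_mat_vec[OF A A v(1)] by simp
    then show "v \<in> mat_kernel A" using k2 v(1) by (intro mat_kernelI[OF A]) auto
  next
    fix v assume "v \<in> mat_kernel A"
    then have v: "v \<in> carrier_vec n" "A *\<^sub>v v = 0\<^sub>v n" using mat_kernelD[OF A] by auto
    have "(A * A) *\<^sub>v v = 0\<^sub>v n" using v assoc_mult_mat_vec[OF A A v(1)] Az by simp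
    then show "v \<in> mat_kernel (A * A)" using v(1) by (intro mat_kernelI[OF AA])
  qed
  have "dim_gen_eigenspace A 0 2 = dim_gen_eigenspace A 0 1"
    unfolding dim_gen_eigenspace_def cm p1 p2 using A ker by (intro kernel_dim_cong) auto
  then have eq: "sum_list (map (min 2) (map fst [(n, e)\<leftarrow>n_as . e = 0]))
      = sum_list (map (min 1) (map fst [(n, e)\<leftarrow>n_as . e = 0]))"
    unfolding dim_gen_eigenspace[OF jnf] by (simp add: o_def)
  have pos: "\<forall>d\<in>set (map fst [(n, e)\<leftarrow>n_as . e = 0]). d > 0"
    using jnf unfolding jordan_nf_def by force
  have ord: "order 0 (char_poly A) = sum_list (map fst [(n, e)\<leftarrow>n_as . e = 0])"
    unfolding jordan_nf_order[OF jnf] by (metis (mono_tags, lifting) case_prod_beta filter_cong)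
  have ord1: "order 0 (char_poly A) = kernel_dim A"
    using ord list_min_eq[OF pos eq] dim_gen_eigenspace[OF jnf, of 0 1]
    unfolding dim_gen_eigenspace_def cm p1 by (simp add: o_def)
  interpret K: kernel n n A by unfold_locales (rule A)
  have wK: "{w} \<subseteq> mat_kernel A" using w A by (auto simp: mat_kernel_def)
  have "K.span {w} = mat_kernel A"
  proof (rule equalityI)
    show "K.span {w} \<subseteq> mat_kernel A" using K.Ker.span_is_subset2[OF wK] .
    have sub: "submodule class_ring (K.span {w}) K.VK" by (rule K.Ker.span_is_submodule[OF wK])
    have ww: "w \<in> K.span {w}" using K.Ker.in_own_span[OF wK] by blast
    show "mat_kernel A \<subseteq> K.span {w}"
    proof
      fix v assume "v \<in> mat_kernel A"
      then have "v \<in> carrier_vec n" "A *\<^sub>v v = 0\<^sub>v n" using A by (auto simp: mat_kernel_def)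
      then obtain a where va: "v = a \<cdot>\<^sub>v w" using k1 by blast
      have "a \<cdot>\<^sub>v w \<in> K.span {w}"
        using submodule.smult_closed[OF sub, of a w] ww by (simp add: class_ring_simps)
      then show "v \<in> K.span {w}" using va by simp
    qed
  qed
  then have "K.dim \<le> 1" using wK by (intro K.Ker.dim_le1I) auto
  then have kd: "kernel_dim A \<le> 1" by simp
  have "eigenvalue A 0" unfolding eigenvalue_def eigenvector_def using w A by (intro exI[of _ w]) auto
  then have "poly (char_poly A) 0 = 0" using eigenvalue_root_char_poly[OF A] by blast
  moreover have "char_poly A \<noteq> 0" using degree_monic_char_poly[OF A] by (metis coeff_0 zero_neq_one)
  ultimately have "order 0 (char_poly A) \<noteq> 0" by (simp add: order_root)
  then show ?thesis using kd ord1 by simp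
qed

lemma cong_refl: "cong_2pi x x" unfolding cong_2pi_def by (rule exI[of _ 0]) simp
lemma cong_sym: "cong_2pi x y \<Longrightarrow> cong_2pi y x"
  unfolding cong_2pi_def by (metis minus_diff_eq mult_minus_right of_int_minus)
lemma cong_trans: "cong_2pi x y \<Longrightarrow> cong_2pi y z \<Longrightarrow> cong_2pi x z"
  unfolding cong_2pi_def
proof (elim exE)
  fix a b :: int assume "x - y = 2 * pi * a" "y - z = 2 * pi * b"
  then have "x - z = 2 * pi * of_int (a + b)" by (simp add: algebra_simps)
  then show "\<exists>k::int. x - z = 2 * pi * k" ..
qed
lemma cong_add: "cong_2pi a b \<Longrightarrow> cong_2pi c d \<Longrightarrow> cong_2pi (a + c) (b + d)"
  unfolding cong_2pi_def
proof (elim exE)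
  fix x y :: int assume "a - b = 2 * pi * x" "c - d = 2 * pi * y"
  then have "a + c - (b + d) = 2 * pi * of_int (x + y)" by (simp add: algebra_simps)
  then show "\<exists>k::int. a + c - (b + d) = 2 * pi * k" ..
qed
lemma cong_diff: "cong_2pi a b \<Longrightarrow> cong_2pi c d \<Longrightarrow> cong_2pi (a - c) (b - d)"
  unfolding cong_2pi_def
proof (elim exE)
  fix x y :: int assume "a - b = 2 * pi * x" "c - d = 2 * pi * y"
  then have "a - c - (b - d) = 2 * pi * of_int (x - y)" by (simp add: algebra_simps)
  then show "\<exists>k::int. a - c - (b - d) = 2 * pi * k" ..
qed
lemma sin_2pi_int: "sin (x + 2 * pi * of_int k) = sin x"
  by (simp add: sin_add)
lemma cos_2pi_int: "cos (x + 2 * pi * of_int k) = cos x"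
  by (simp add: cos_add)
lemma cong_sin: assumes "cong_2pi x y" shows "sin x = sin y"
proof -
  from assms obtain k :: int where "x - y = 2 * pi * of_int k" unfolding cong_2pi_def by blast
  then have "x = y + 2 * pi * of_int k" by linarith
  then show ?thesis by (simp only: sin_2pi_int)
qed
lemma cong_cos: assumes "cong_2pi x y" shows "cos x = cos y"
proof -
  from assms obtain k :: int where "x - y = 2 * pi * of_int k" unfolding cong_2pi_def by blast
  then have "x = y + 2 * pi * of_int k" by linarith
  then show ?thesis by (simp only: cos_2pi_int)
qed

lemma ceil_bound:
  fixes nc :: nat
  shows "real_of_int (\<lceil>real nc / 4\<rceil> - 1) < real nc / 4"
  using ceiling_correct[of "real nc / 4"] by simp

lemma cos_pos_k:
  fixes nc :: nat and k :: int
  assumes "nc > 0" "\<bar>k\<bar> \<le> \<lceil>real nc / 4\<rceil> - 1"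
  shows "cos (2 * pi * of_int k / real nc) > 0"
proof -
  have "real_of_int \<bar>k\<bar> < real nc / 4" using ceil_bound[of nc] assms(2)
    by (smt (verit) of_int_le_iff)
  then have "\<bar>2 * pi * of_int k / real nc\<bar> < pi / 2"
    using assms(1) pi_gt_zero by (simp add: abs_mult field_simps)
  then have "- (pi / 2) < 2 * pi * of_int k / real nc \<and> 2 * pi * of_int k / real nc < pi / 2"
    using abs_less_iff[of "2 * pi * of_int k / real nc" "pi/2"] by linarith
  then show ?thesis using cos_gt_zero_pi[of "2 * pi * of_int k / real nc"] by linarith
qed

lemma C1_cos_pos:
  assumes "cond_C1 m nc \<theta>" "hc_edge m nc a b" "nc > 0"
  shows "cos (\<theta> b - \<theta> a) > 0" "cos (\<theta> a - \<theta> b) > 0"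
proof -
  from assms obtain k :: int where k: "\<bar>k\<bar> \<le> \<lceil>real nc / 4\<rceil> - 1"
     "cong_2pi (\<theta> a - \<theta> b) (2 * pi * of_int k / real nc)"
    unfolding cond_C1_def by blast
  have "cos (\<theta> a - \<theta> b) = cos (2 * pi * of_int k / real nc)" by (rule cong_cos[OF k(2)])
  also have "\<dots> > 0" by (rule cos_pos_k[OF assms(3) k(1)])
  finally show "cos (\<theta> a - \<theta> b) > 0" .
  then show "cos (\<theta> b - \<theta> a) > 0" by (metis cos_minus minus_diff_eq)
qed

definition dd :: "nat \<Rightarrow> (nat \<Rightarrow> int) \<Rightarrow> nat \<Rightarrow> real" where
  "dd nc k p = 2 * pi * of_int (k p) / real nc"

primrec cfg :: "nat \<Rightarrow> (nat \<Rightarrow> int) \<Rightarrow> nat \<Rightarrow> real" where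
  "cfg nc k 0 = 0"
| "cfg nc k (Suc t) = cfg nc k t - dd nc k ((t - 1) div (nc - 1))"

lemma cfg_step: "cfg nc k t - cfg nc k (t + 1) = dd nc k ((t - 1) div (nc - 1))"
  by simp

lemma blk_eq:
  fixes N :: nat
  assumes "p * N \<le> q" "q < Suc p * N"
  shows "q div N = p"
  using assms by (metis div_nat_eqI mult.commute)

lemma cfg_tele:
  assumes "nc \<ge> 2" "s \<le> nc - 1"
  shows "cfg nc k (p * (nc - 1) + 1) - cfg nc k (p * (nc - 1) + 1 + s) = real s * dd nc k p"
  using assms(2)
proof (induction s)
  case 0 then show ?case by simp
next
  case (Suc s)
  have "(p * (nc - 1) + 1 + s - 1) div (nc - 1) = p"
    using Suc.prems assms(1) by (intro blk_eq) auto
  then have "cfg nc k (p * (nc - 1) + 1 + s) - cfg nc k (p * (nc - 1) + 1 + Suc s) = dd nc k p"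
    using cfg_step[of nc k "p * (nc - 1) + 1 + s"] by simp
  with Suc show ?case by (simp add: algebra_simps)
qed

definition KS :: "nat \<Rightarrow> nat \<Rightarrow> (nat \<Rightarrow> int) set" where
  "KS m nc = PiE {..<m} (\<lambda>_. {-(\<lceil>real nc / 4\<rceil> - 1) .. \<lceil>real nc / 4\<rceil> - 1})"

lemma cfg_closing:
  assumes "nc \<ge> 2"
  shows "cong_2pi (cfg nc k (p * (nc - 1) + 1) - cfg nc k (p * (nc - 1) + 1 + (nc - 1)))
                  (2 * pi * of_int (- k p) / real nc)"
proof -
  have "cfg nc k (p * (nc - 1) + 1) - cfg nc k (p * (nc - 1) + 1 + (nc - 1)) = real (nc - 1) * dd nc k p"
    by (rule cfg_tele[OF assms]) simp
  also have "\<dots> = 2 * pi * of_int (- k p) / real nc + 2 * pi * of_int (k p)"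
    using assms by (simp add: dd_def of_nat_diff field_simps)
  finally show ?thesis unfolding cong_2pi_def by (intro exI[of _ "k p"]) simp
qed

lemma cfg_configs:
  assumes nc: "nc \<ge> 5" and k: "k \<in> KS m nc"
  shows "cfg nc k \<in> hc_configs m nc"
proof -
  let ?K = "\<lceil>real nc / 4\<rceil> - 1"
  have kb: "\<bar>k p\<bar> \<le> ?K" if "p < m" for p
  proof -
    have "k p \<in> {-?K..?K}" using PiE_mem[OF k[unfolded KS_def]] that by simp
    then show ?thesis by (simp only: atLeastAtMost_iff) arith
  qed
  have C1: "cond_C1 m nc (cfg nc k)"
    unfolding cond_C1_def
  proof (intro allI impI)
    fix i j assume "hc_edge m nc i j"
    then consider (a) "1 \<le> i" "i \<le> m * (nc - 1)" "j = i + 1"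
      | (b) p where "p < m" "i = p * (nc - 1) + 1" "j = i + nc - 1"
      unfolding hc_edge_def by blast
    then show "\<exists>k'::int. \<bar>k'\<bar> \<le> ?K \<and> cong_2pi (cfg nc k i - cfg nc k j) (2 * pi * of_int k' / real nc)"
    proof cases
      case a
      have "(i - 1) div (nc - 1) < m" using a nc
        by (intro less_mult_imp_div_less) auto
      have "cfg nc k i - cfg nc k j = 2 * pi * of_int (k ((i - 1) div (nc - 1))) / real nc"
        using a(3) cfg_step[of nc k i] by (simp add: dd_def)
      moreover have "\<bar>k ((i - 1) div (nc - 1))\<bar> \<le> ?K" using kb[OF \<open>(i - 1) div (nc - 1) < m\<close>] .
      ultimately show ?thesis using cong_refl[of "2 * pi * of_int (k ((i - 1) div (nc - 1))) / real nc"] by auto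
    next
      case b
      have "j = p * (nc - 1) + 1 + (nc - 1)" using b nc by simp
      then have "cong_2pi (cfg nc k i - cfg nc k j) (2 * pi * of_int (- k p) / real nc)"
        using b(2) cfg_closing[of nc k p] nc by simp
      moreover have "\<bar>- k p\<bar> \<le> ?K" using kb[OF b(1)] by simp
      ultimately show ?thesis by blast
    qed
  qed
  have C2: "cond_C2 m nc (cfg nc k)"
    unfolding cond_C2_def
  proof (intro allI impI ballI)
    fix p i j assume p: "p < m" and i: "i \<in> {p * (nc - 1) + 1 .. (p + 1) * (nc - 1)}"
      and j: "j \<in> {p * (nc - 1) + 1 .. (p + 1) * (nc - 1)}"
    have "(i - 1) div (nc - 1) = p" using i nc by (intro blk_eq) auto
    moreover have "(j - 1) div (nc - 1) = p" using j nc by (intro blk_eq) auto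
    ultimately show "cong_2pi (cfg nc k i - cfg nc k (i + 1)) (cfg nc k j - cfg nc k (j + 1))"
      using cfg_step[of nc k i] cfg_step[of nc k j] cong_refl by simp
  qed
  show ?thesis using C1 C2 unfolding hc_configs_def by simp
qed

lemmas [trans] = cong_trans

lemma rot_equiv: "equiv UNIV (rot_rel m nc)"
proof (rule equivI)
  show "refl (rot_rel m nc)" unfolding refl_on_def rot_rel_def
    by (auto intro!: exI[of _ 0] cong_refl)
  show "sym (rot_rel m nc)" unfolding sym_def rot_rel_def
  proof (clarify)
    fix x y :: "nat \<Rightarrow> real" and r assume h: "\<forall>i\<in>hc_V m nc. cong_2pi (x i) (y i + r)"
    have "cong_2pi (y i) (x i + - r)" if "i \<in> hc_V m nc" for i
    proof -
      have "cong_2pi (y i + r) (x i)" using h that cong_sym by blast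
      then have "cong_2pi (y i + r + - r) (x i + - r)" using cong_add cong_refl by blast
      then show ?thesis by simp
    qed
    then show "\<exists>r. \<forall>i\<in>hc_V m nc. cong_2pi (y i) (x i + r)" by blast
  qed
  show "trans (rot_rel m nc)" unfolding trans_def rot_rel_def
  proof (clarify)
    fix x y z :: "nat \<Rightarrow> real" and r s assume h1: "\<forall>i\<in>hc_V m nc. cong_2pi (x i) (y i + r)"
      and h2: "\<forall>i\<in>hc_V m nc. cong_2pi (y i) (z i + s)"
    have "cong_2pi (x i) (z i + (s + r))" if "i \<in> hc_V m nc" for i
    proof -
      have "cong_2pi (y i + r) (z i + s + r)" using h2 that cong_add cong_refl by blast
      then have "cong_2pi (y i + r) (z i + (s + r))" by (simp add: add.assoc)
      moreover have "cong_2pi (x i) (y i + r)" using h1 that by blast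
      ultimately show ?thesis using cong_trans by blast
    qed
    then show "\<exists>r. \<forall>i\<in>hc_V m nc. cong_2pi (x i) (z i + r)" by blast
  qed
qed simp

lemma configs_rep:
  assumes nc: "nc \<ge> 5" and th: "\<theta> \<in> hc_configs m nc"
  shows "\<exists>k \<in> KS m nc. (\<theta>, cfg nc k) \<in> rot_rel m nc"
proof -
  let ?K = "\<lceil>real nc / 4\<rceil> - 1"
  let ?N = "nc - 1"
  let ?P = "\<lambda>p k'. \<bar>k'\<bar> \<le> ?K \<and> cong_2pi (\<theta> (p * ?N + 1) - \<theta> (p * ?N + 1 + 1)) (2 * pi * of_int k' / real nc)"
  define k where "k = (\<lambda>p. if p < m then (SOME k'. ?P p k') else undefined)"
  have C1: "cond_C1 m nc \<theta>" and C2: "cond_C2 m nc \<theta>" using th unfolding hc_configs_def by auto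
  have kP: "?P p (k p)" if "p < m" for p
  proof -
    have "hc_edge m nc (p * ?N + 1) (p * ?N + 1 + 1)"
      unfolding hc_edge_def using that nc
      by (intro disjI1) (auto simp: mult_le_mono1 Suc_le_eq less_mult_imp_div_less
              intro: order_trans[OF _ mult_le_mono1[of "Suc p" m]])
    then have "\<exists>k'. ?P p k'" using C1 unfolding cond_C1_def by blast
    then have "?P p (SOME k'. ?P p k')" by (rule someI_ex)
    moreover have "k p = (SOME k'. ?P p k')" unfolding k_def using that by simp
    ultimately show ?thesis by (simp only:)
  qed
  have kS: "k \<in> KS m nc" unfolding KS_def
  proof (rule PiE_I)
    fix p assume "p \<in> {..<m}"
    then have "\<bar>k p\<bar> \<le> ?K" using kP by auto
    then show "k p \<in> {-?K..?K}" by (simp only: atLeastAtMost_iff) arith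
  next
    fix p assume "p \<notin> {..<m}" then show "k p = undefined" unfolding k_def by simp
  qed
  have stepc: "cong_2pi (\<theta> t - \<theta> (t + 1)) (cfg nc k t - cfg nc k (t + 1))"
    if t: "1 \<le> t" "t \<le> m * ?N" for t
  proof -
    define p where "p = (t - 1) div ?N"
    have pm: "p < m" unfolding p_def using t by (intro less_mult_imp_div_less) auto
    have N0: "?N > 0" using nc by simp
    have "p * ?N \<le> t - 1" unfolding p_def by (rule div_times_less_eq_dividend)
    then have lo: "p * ?N + 1 \<le> t" using t by linarith
    have "t - 1 < ?N + p * ?N" unfolding p_def using N0 by (rule dividend_less_div_times)
    then have hi: "t \<le> (p + 1) * ?N" using t by simp
    have blk: "p * ?N + 1 \<le> p * ?N + 1" "p * ?N + 1 \<le> (p + 1) * ?N" using N0 by auto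
    have "cong_2pi (\<theta> t - \<theta> (t + 1)) (\<theta> (p * ?N + 1) - \<theta> (p * ?N + 1 + 1))"
      using C2 pm lo hi blk unfolding cond_C2_def by auto
    also have "cong_2pi \<dots> (2 * pi * of_int (k p) / real nc)" using kP[OF pm] by blast
    finally have "cong_2pi (\<theta> t - \<theta> (t + 1)) (2 * pi * of_int (k p) / real nc)" .
    moreover have "cfg nc k t - cfg nc k (t + 1) = 2 * pi * of_int (k p) / real nc"
      unfolding cfg_step p_def dd_def ..
    ultimately show ?thesis by simp
  qed
  have tele: "cong_2pi (\<theta> 1 - \<theta> t) (cfg nc k 1 - cfg nc k t)" if "1 \<le> t" "t \<le> hc_n m nc" for t
    using that
  proof (induction t rule: dec_induct)
    case base then show ?case by (simp add: cong_refl)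
  next
    case (step t)
    have "t \<le> m * ?N" using step unfolding hc_n_def by simp
    then have "cong_2pi (\<theta> t - \<theta> (t + 1)) (cfg nc k t - cfg nc k (t + 1))" using stepc step by simp
    from cong_add[OF step.IH[OF Suc_leD[OF step.prems]] this]
    have "cong_2pi (\<theta> 1 - \<theta> t + (\<theta> t - \<theta> (t + 1))) (cfg nc k 1 - cfg nc k t + (cfg nc k t - cfg nc k (t + 1)))" .
    moreover have dd3: "a - b + (b - c) = a - c" for a b c :: real by simp
    ultimately show ?case by (simp only: dd3 Suc_eq_plus1)
  qed
  have "cong_2pi (\<theta> i) (cfg nc k i + (\<theta> 1 - cfg nc k 1))" if "i \<in> hc_V m nc" for i
  proof -
    have "cong_2pi (\<theta> 1 - \<theta> i) (cfg nc k 1 - cfg nc k i)" using tele that unfolding hc_V_def by auto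
    then have "cong_2pi (\<theta> 1 - (\<theta> 1 - \<theta> i)) (\<theta> 1 - (cfg nc k 1 - cfg nc k i))"
      using cong_diff cong_refl by blast
    then show ?thesis by (simp add: algebra_simps)
  qed
  then show ?thesis using kS unfolding rot_rel_def by blast
qed

lemma cong_frac_eq:
  fixes a b :: int and nc :: nat
  assumes "nc > 0" "\<bar>a\<bar> \<le> \<lceil>real nc / 4\<rceil> - 1" "\<bar>b\<bar> \<le> \<lceil>real nc / 4\<rceil> - 1"
    and "cong_2pi (2 * pi * of_int a / real nc) (2 * pi * of_int b / real nc)"
  shows "a = b"
proof -
  from assms(4) obtain j :: int where j: "2 * pi * of_int a / real nc - 2 * pi * of_int b / real nc = 2 * pi * of_int j"
    unfolding cong_2pi_def by blast
  then have "2 * pi * (of_int a - of_int b) = 2 * pi * (real nc * of_int j)" using assms(1)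
    by (simp add: field_simps)
  then have "of_int a - of_int b = real nc * of_int j" by simp
  then have eq: "a - b = int nc * j" by (metis of_int_diff of_int_eq_iff of_int_mult of_int_of_nat_eq)
  have "real_of_int \<bar>a\<bar> < real nc / 4" "real_of_int \<bar>b\<bar> < real nc / 4"
    using ceil_bound[of nc] assms(2,3) by (smt (verit) of_int_le_iff)+
  then have "real_of_int \<bar>a - b\<bar> < real nc" by linarith
  then have "\<bar>a - b\<bar> < int nc" by linarith
  then have lt: "int nc * \<bar>j\<bar> < int nc" using eq by (simp add: abs_mult)
  have "j = 0"
  proof (rule ccontr)
    assume "j \<noteq> 0" then have "1 \<le> \<bar>j\<bar>" by simp
    then have "int nc * 1 \<le> int nc * \<bar>j\<bar>" by (intro mult_left_mono) auto
    then show False using lt by simp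
  qed
  then show ?thesis using eq by simp
qed

lemma card_quot:
  assumes nc: "nc \<ge> 5"
  shows "int (card (hc_configs m nc // rot_rel m nc)) = (2 * \<lceil>real nc / 4\<rceil> - 1) ^ m"
proof -
  let ?K = "\<lceil>real nc / 4\<rceil> - 1"
  let ?N = "nc - 1"
  let ?R = "rot_rel m nc"
  define F where "F = (\<lambda>k. ?R `` {cfg nc k})"
  have eqv: "equiv UNIV ?R" by (rule rot_equiv)
  have inj: "inj_on F (KS m nc)"
  proof (rule inj_onI)
    fix k k' assume k: "k \<in> KS m nc" and k': "k' \<in> KS m nc" and e: "F k = F k'"
    then have "(cfg nc k, cfg nc k') \<in> ?R" unfolding F_def using eq_equiv_class_iff[OF eqv] by blast
    then obtain r where r: "\<forall>i\<in>hc_V m nc. cong_2pi (cfg nc k i) (cfg nc k' i + r)"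
      unfolding rot_rel_def by blast
    have "k p = k' p" if p: "p < m" for p
    proof -
      let ?i = "p * ?N + 1"
      have "(p + 1) * ?N \<le> m * ?N" using p by (intro mult_le_mono1) simp
      moreover have "(p + 1) * ?N = p * ?N + ?N" by simp
      ultimately have pN: "p * ?N + 1 + 1 \<le> m * ?N + 1" using nc by linarith
      have iV: "?i \<in> hc_V m nc" "?i + 1 \<in> hc_V m nc" unfolding hc_V_def hc_n_def using pN p by auto
      have "cong_2pi (cfg nc k ?i - cfg nc k (?i + 1)) ((cfg nc k' ?i + r) - (cfg nc k' (?i + 1) + r))"
        using r iV cong_diff by blast
      moreover have "(?i - 1) div ?N = p" using nc by simp
      ultimately have "cong_2pi (dd nc k p) (dd nc k' p)" by (simp only: cfg_step) simp
      moreover have "k p \<in> {-?K..?K}" "k' p \<in> {-?K..?K}"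
        using PiE_mem[OF k[unfolded KS_def]] PiE_mem[OF k'[unfolded KS_def]] p by auto
      then have "\<bar>k p\<bar> \<le> ?K" "\<bar>k' p\<bar> \<le> ?K"
        by (simp_all only: atLeastAtMost_iff) arith+
      ultimately show ?thesis using cong_frac_eq[of nc "k p" "k' p"] nc unfolding dd_def by simp
    qed
    then show "k = k'" using k k' unfolding KS_def by (intro PiE_ext) auto
  qed
  have img: "F ` KS m nc = hc_configs m nc // ?R"
  proof (rule equalityI; rule subsetI)
    fix X assume "X \<in> F ` KS m nc"
    then obtain k where "k \<in> KS m nc" "X = F k" by blast
    then show "X \<in> hc_configs m nc // ?R" unfolding F_def using cfg_configs[OF nc] by (auto intro: quotientI)
  next
    fix X assume "X \<in> hc_configs m nc // ?R"
    then obtain \<theta> where th: "\<theta> \<in> hc_configs m nc" "X = ?R `` {\<theta>}" by (auto elim: quotientE)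
    then obtain k where k: "k \<in> KS m nc" "(\<theta>, cfg nc k) \<in> ?R" using configs_rep[OF nc] by blast
    have "?R `` {\<theta>} = ?R `` {cfg nc k}" using equiv_class_eq[OF eqv k(2)] .
    then show "X \<in> F ` KS m nc" using k th unfolding F_def by blast
  qed
  have "card (hc_configs m nc // ?R) = card (KS m nc)"
    using card_image[OF inj] img by simp
  also have "\<dots> = (\<Prod>i<m. card {-?K..?K})" unfolding KS_def by (simp add: card_PiE)
  also have "\<dots> = (nat (2 * \<lceil>real nc / 4\<rceil> - 1)) ^ m" by simp
  finally have "int (card (hc_configs m nc // ?R)) = int (nat (2 * \<lceil>real nc / 4\<rceil> - 1) ^ m)" by simp
  also have "\<dots> = (2 * \<lceil>real nc / 4\<rceil> - 1) ^ m"
  proof -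
    have "\<lceil>real nc / 4\<rceil> \<ge> 1" using nc by simp
    then show ?thesis by (simp add: of_nat_power)
  qed
  finally show ?thesis .
qed

lemma adj_cases:
  assumes nc: "nc \<ge> 5" and i: "1 \<le> i" "i \<le> hc_n m nc"
  shows "(hc_edge m nc i j \<or> hc_edge m nc j i) \<longleftrightarrow>
     ((i \<le> m * (nc - 1) \<and> j = i + 1) \<or> ((\<exists>p<m. i = p * (nc - 1) + 1) \<and> j = i + (nc - 1))
      \<or> (2 \<le> i \<and> j = i - 1) \<or> ((\<exists>p<m. i = p * (nc - 1) + 1 + (nc - 1)) \<and> j = i - (nc - 1)))"
proof -
  have e1: "hc_edge m nc i j \<longleftrightarrow> (i \<le> m * (nc - 1) \<and> j = i + 1) \<or> ((\<exists>p<m. i = p * (nc - 1) + 1) \<and> j = i + (nc - 1))"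
    unfolding hc_edge_def using i nc by auto
  have e2: "hc_edge m nc j i \<longleftrightarrow> (2 \<le> i \<and> j = i - 1) \<or> ((\<exists>p<m. i = p * (nc - 1) + 1 + (nc - 1)) \<and> j = i - (nc - 1))"
  proof
    assume "hc_edge m nc j i"
    then consider (a) "1 \<le> j" "j \<le> m * (nc - 1)" "i = j + 1"
      | (b) p where "p < m" "j = p * (nc - 1) + 1" "i = j + nc - 1"
      unfolding hc_edge_def by blast
    then show "(2 \<le> i \<and> j = i - 1) \<or> ((\<exists>p<m. i = p * (nc - 1) + 1 + (nc - 1)) \<and> j = i - (nc - 1))"
    proof cases
      case a then show ?thesis by auto
    next
      case b
      then have "i = p * (nc - 1) + 1 + (nc - 1)" "j = i - (nc - 1)" using nc by auto
      then show ?thesis using b(1) by blast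
    qed
  next
    assume "(2 \<le> i \<and> j = i - 1) \<or> ((\<exists>p<m. i = p * (nc - 1) + 1 + (nc - 1)) \<and> j = i - (nc - 1))"
    then show "hc_edge m nc j i"
    proof
      assume "2 \<le> i \<and> j = i - 1"
      then show ?thesis using i unfolding hc_edge_def hc_n_def by auto
    next
      assume h: "(\<exists>p<m. i = p * (nc - 1) + 1 + (nc - 1)) \<and> j = i - (nc - 1)"
      then obtain p where p: "p < m" "i = p * (nc - 1) + 1 + (nc - 1)" by blast
      then have "j = p * (nc - 1) + 1" "i = j + nc - 1" using h nc by auto
      then show ?thesis using p(1) unfolding hc_edge_def by blast
    qed
  qed
  show ?thesis using e1 e2 by blast
qed

lemma sum_delta_cond:
  fixes h :: "nat \<Rightarrow> real"
  assumes "P \<Longrightarrow> a \<in> S" "finite S"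
  shows "(\<Sum>j\<in>S. if P \<and> j = a then h j else 0) = (if P then h a else 0)"
proof (cases P)
  case True
  then have "(\<Sum>j\<in>S. if P \<and> j = a then h j else 0) = (\<Sum>j\<in>S. if j = a then h j else 0)" by simp
  also have "\<dots> = h a" using assms True by (simp add: sum.delta')
  finally show ?thesis using True by simp
qed simp

lemma excl4:
  fixes c x :: real
  assumes "\<not> (P1 \<and> P2)" "\<not> (P1 \<and> P3)" "\<not> (P1 \<and> P4)" "\<not> (P2 \<and> P3)" "\<not> (P2 \<and> P4)" "\<not> (P3 \<and> P4)"
  shows "(if P1 \<or> P2 \<or> P3 \<or> P4 then c else 0) * x =
     c * ((if P1 then x else 0) + (if P2 then x else 0) + (if P3 then x else 0) + (if P4 then x else 0))"
  using assms by (cases P1; cases P2; cases P3; cases P4) simp_all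

lemma nbr_sum:
  fixes h :: "nat \<Rightarrow> real"
  assumes nc: "nc \<ge> 5" and i: "1 \<le> i" "i \<le> hc_n m nc"
  shows "(\<Sum>j = 1 .. hc_n m nc. hc_adj m nc c i j * h j) =
    c * ((if i \<le> m * (nc - 1) then h (i + 1) else 0)
       + (if (\<exists>p<m. i = p * (nc - 1) + 1) then h (i + (nc - 1)) else 0)
       + (if 2 \<le> i then h (i - 1) else 0)
       + (if (\<exists>p<m. i = p * (nc - 1) + 1 + (nc - 1)) then h (i - (nc - 1)) else 0))"
proof -
  let ?N = "nc - 1"
  let ?A = "i \<le> m * ?N" and ?B = "\<exists>p<m. i = p * ?N + 1" and ?C = "2 \<le> i"
    and ?D = "\<exists>p<m. i = p * ?N + 1 + ?N"
  let ?S = "{1 .. hc_n m nc}"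
  have pw: "hc_adj m nc c i j * h j = c * ((if ?A \<and> j = i + 1 then h j else 0) + (if ?B \<and> j = i + ?N then h j else 0)
      + (if ?C \<and> j = i - 1 then h j else 0) + (if ?D \<and> j = i - ?N then h j else 0))" for j
  proof -
    have D2: "?D \<Longrightarrow> i \<ge> ?N + 1" by auto
    have N4: "?N \<ge> 4" using nc by simp
    have a: "hc_adj m nc c i j = (if (?A \<and> j = i + 1) \<or> (?B \<and> j = i + ?N) \<or> (?C \<and> j = i - 1) \<or> (?D \<and> j = i - ?N) then c else 0)"
      unfolding hc_adj_def adj_cases[OF nc i, of j] ..
    have x: "i + 1 \<noteq> i + ?N" "i + 1 \<noteq> i - 1" "i + 1 \<noteq> i - ?N" "i + ?N \<noteq> i - 1" "i + ?N \<noteq> i - ?N"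
      using N4 by auto
    have x6: "?D \<Longrightarrow> i - 1 \<noteq> i - ?N" using N4 D2 by auto
    show ?thesis unfolding a
      by (rule excl4) (use x x6 in blast)+
  qed
  have mem: "?A \<Longrightarrow> i + 1 \<in> ?S" "?B \<Longrightarrow> i + ?N \<in> ?S" "?C \<Longrightarrow> i - 1 \<in> ?S" "?D \<Longrightarrow> i - ?N \<in> ?S"
  proof -
    show "?A \<Longrightarrow> i + 1 \<in> ?S" unfolding hc_n_def by simp
    show "?C \<Longrightarrow> i - 1 \<in> ?S" using i(2) by auto
    show "?B \<Longrightarrow> i + ?N \<in> ?S"
    proof -
      assume ?B then obtain p where p: "p < m" "i = p * ?N + 1" by blast
      have "(p + 1) * ?N \<le> m * ?N" using p by (intro mult_le_mono1) simp
      then show ?thesis using p unfolding hc_n_def by simp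
    qed
    show "?D \<Longrightarrow> i - ?N \<in> ?S"
    proof -
      assume ?D then obtain p where p: "p < m" "i = p * ?N + 1 + ?N" by blast
      have "p * ?N \<le> m * ?N" using p by (intro mult_le_mono1) simp
      then show ?thesis using p unfolding hc_n_def by simp
    qed
  qed
  have "(\<Sum>j\<in>?S. hc_adj m nc c i j * h j) = c * ((\<Sum>j\<in>?S. if ?A \<and> j = i + 1 then h j else 0)
      + (\<Sum>j\<in>?S. if ?B \<and> j = i + ?N then h j else 0)
      + (\<Sum>j\<in>?S. if ?C \<and> j = i - 1 then h j else 0) + (\<Sum>j\<in>?S. if ?D \<and> j = i - ?N then h j else 0))"
    by (simp only: pw sum_distrib_left[symmetric] sum.distrib)
  also have "\<dots> = c * ((if ?A then h (i + 1) else 0) + (if ?B then h (i + ?N) else 0)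
      + (if ?C then h (i - 1) else 0) + (if ?D then h (i - ?N) else 0))"
    by (simp only: sum_delta_cond[OF mem(1)] sum_delta_cond[OF mem(2)] sum_delta_cond[OF mem(3)]
        sum_delta_cond[OF mem(4)] finite_atLeastAtMost)
  finally show ?thesis .
qed

lemma sin_Nd:
  assumes "nc \<ge> 2"
  shows "sin (real (nc - 1) * dd nc k p) = - sin (dd nc k p)"
proof -
  have "real (nc - 1) * dd nc k p = - dd nc k p + 2 * pi * of_int (k p)"
    using assms by (simp add: dd_def of_nat_diff field_simps)
  then show ?thesis by (simp only: sin_2pi_int sin_minus)
qed

lemma cfg_balance:
  assumes nc: "nc \<ge> 5" and i: "1 \<le> i" "i \<le> hc_n m nc"
  shows "(\<Sum>j = 1 .. hc_n m nc. hc_adj m nc c i j * sin (cfg nc k j - cfg nc k i)) = 0"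
proof -
  let ?N = "nc - 1"
  let ?h = "\<lambda>j. sin (cfg nc k j - cfg nc k i)"
  let ?A = "i \<le> m * ?N" and ?B = "\<exists>p<m. i = p * ?N + 1" and ?C = "2 \<le> i"
    and ?D = "\<exists>p<m. i = p * ?N + 1 + ?N"
  define q where "q = (i - 1) div ?N"
  define \<rho> where "\<rho> = (i - 1) mod ?N"
  have N4: "?N \<ge> 4" using nc by simp
  have iq: "i = q * ?N + 1 + \<rho>" unfolding q_def \<rho>_def using i div_mult_mod_eq[of "i - 1" "?N"] by linarith
  have \<rho>N: "\<rho> < ?N" unfolding \<rho>_def using N4 by simp
  have fA: "?h (i + 1) = - sin (dd nc k q)"
  proof -
    have "cfg nc k i - cfg nc k (i + 1) = dd nc k q" unfolding q_def by (rule cfg_step)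
    then have "cfg nc k (i + 1) - cfg nc k i = - dd nc k q" by simp
    then show ?thesis by simp
  qed
  have fC: "?h (i - 1) = sin (dd nc k ((i - 2) div ?N))" if "2 \<le> i"
  proof -
    have "cfg nc k (i - 1) - cfg nc k (i - 1 + 1) = dd nc k ((i - 1 - 1) div ?N)" by (rule cfg_step)
    moreover have "i - 1 + 1 = i" "i - 1 - 1 = i - 2" using that by auto
    ultimately show ?thesis by simp
  qed
  have fB: "?h (i + ?N) = sin (dd nc k p)" if "i = p * ?N + 1" for p
  proof -
    have "cfg nc k (p * ?N + 1) - cfg nc k (p * ?N + 1 + ?N) = real ?N * dd nc k p"
      using nc by (intro cfg_tele) auto
    then have "cfg nc k (i + ?N) - cfg nc k i = - (real ?N * dd nc k p)" using that by simp
    then show ?thesis using sin_Nd[of nc k p] nc by simp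
  qed
  have fD: "?h (i - ?N) = - sin (dd nc k p)" if "i = p * ?N + 1 + ?N" for p
  proof -
    have "cfg nc k (p * ?N + 1) - cfg nc k (p * ?N + 1 + ?N) = real ?N * dd nc k p"
      using nc by (intro cfg_tele) auto
    moreover have "i - ?N = p * ?N + 1" using that by simp
    ultimately have "cfg nc k (i - ?N) - cfg nc k i = real ?N * dd nc k p" using that by simp
    then show ?thesis using sin_Nd[of nc k p] nc by simp
  qed
  have uniq: "p = q \<and> r = \<rho>" if "i = p * ?N + 1 + r" "r < ?N" for p r
  proof -
    have "i - 1 = p * ?N + r" using that by simp
    then have "(i - 1) div ?N = p" "(i - 1) mod ?N = r" using that(2) by auto
    then show ?thesis unfolding q_def \<rho>_def by simp
  qed
  have Bq: "?B \<longleftrightarrow> \<rho> = 0 \<and> q < m"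
  proof
    assume ?B then obtain p where "p < m" "i = p * ?N + 1" by blast
    then show "\<rho> = 0 \<and> q < m" using uniq[of p 0] N4 by auto
  next
    assume "\<rho> = 0 \<and> q < m" then show ?B using iq by auto
  qed
  have Dq: "?D \<longleftrightarrow> \<rho> = 0 \<and> 1 \<le> q \<and> q \<le> m"
  proof
    assume ?D then obtain p where p: "p < m" "i = p * ?N + 1 + ?N" by blast
    then have "i = (p + 1) * ?N + 1 + 0" by simp
    then have "p + 1 = q \<and> 0 = \<rho>" using N4 by (intro uniq) auto
    then show "\<rho> = 0 \<and> 1 \<le> q \<and> q \<le> m" using p(1) by auto
  next
    assume h: "\<rho> = 0 \<and> 1 \<le> q \<and> q \<le> m"
    then obtain q' where q': "q = Suc q'" by (cases q) auto
    then have "i = q' * ?N + 1 + ?N" "q' < m" using iq h by auto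
    then show ?D by blast
  qed
  have qm: "q \<le> m"
  proof -
    have "q * ?N \<le> m * ?N" using iq i unfolding hc_n_def by linarith
    then show ?thesis using N4 by simp
  qed
  have S: "(\<Sum>j = 1 .. hc_n m nc. hc_adj m nc c i j * ?h j) =
    c * ((if ?A then ?h (i + 1) else 0) + (if ?B then ?h (i + ?N) else 0)
       + (if ?C then ?h (i - 1) else 0) + (if ?D then ?h (i - ?N) else 0))"
    by (rule nbr_sum[OF nc i])
  show ?thesis
  proof (cases "\<rho> = 0")
    case False
    have A: ?A
    proof (rule ccontr)
      assume "\<not> ?A" then have "i = m * ?N + 1" using i unfolding hc_n_def by simp
      then have "i = m * ?N + 1 + 0" by simp
      then have "m = q \<and> 0 = \<rho>" using N4 by (intro uniq) auto
      then show False using False by simp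
    qed
    have C: ?C using iq False by simp
    have "(i - 2) div ?N = q"
    proof -
      have "i - 2 = q * ?N + (\<rho> - 1)" using iq False by simp
      then show ?thesis using \<rho>N by simp
    qed
    moreover have nB: "\<not> ?B" using Bq False by blast
    moreover have nD: "\<not> ?D" using Dq False by blast
    ultimately show ?thesis unfolding S
      by (simp only: if_P[OF A] if_P[OF C] if_not_P[OF nB] if_not_P[OF nD] fA fC[OF C]) simp
  next
    case True
    have AB: "(if ?A then ?h (i + 1) else 0) + (if ?B then ?h (i + ?N) else 0) = 0"
    proof (cases "q < m")
      case True2: True
      have "Suc q * ?N \<le> m * ?N" using True2 by (intro mult_le_mono1) simp
      then have "q * ?N + ?N \<le> m * ?N" by simp
      then have A: ?A using iq True N4 by simp
      have iq1: "i = q * ?N + 1" using iq True by simp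
      have B: ?B using Bq True True2 by blast
      show ?thesis by (simp only: if_P[OF A] if_P[OF B] fA fB[OF iq1])
    next
      case False
      then have "q = m" using qm by simp
      then have "\<not> ?A" using iq True N4 by simp
      moreover have "\<not> ?B" using Bq False by blast
      ultimately show ?thesis by (simp only: if_not_P) simp
    qed
    have CD: "(if ?C then ?h (i - 1) else 0) + (if ?D then ?h (i - ?N) else 0) = 0"
    proof (cases "1 \<le> q")
      case True2: True
      obtain q' where q': "q = Suc q'" using True2 by (cases q) auto
      have iD0: "i = q' * ?N + 1 + ?N" using iq True q' by simp
      then have iD: "i = (q - 1) * ?N + 1 + ?N" using q' by simp
      have C: ?C using iD0 N4 by simp
      have "(i - 2) div ?N = q - 1"
      proof -
        have e: "i - 2 = (q - 1) * ?N + (?N - 1)" using iD N4 by simp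
        show ?thesis by (rule blk_eq) (simp_all only: e, simp, use N4 in simp)
      qed
      moreover have D: ?D using Dq True True2 qm by blast
      ultimately show ?thesis by (simp only: if_P[OF C] if_P[OF D] fC[OF C] fD[OF iD]) simp
    next
      case False
      then have "q = 0" by simp
      then have "i = 1" using iq True by simp
      moreover have "\<not> ?D" using Dq True False by blast
      moreover have "\<not> ?C" using \<open>i = 1\<close> by simp
      ultimately show ?thesis by (simp only: if_not_P) simp
    qed
    show ?thesis unfolding S using AB CD by (simp add: algebra_simps)
  qed
qed

lemma jac_lapm:
  "kuramoto_jac m nc c \<theta> = lapm (hc_n m nc) (\<lambda>i j. hc_adj m nc c (i + 1) (j + 1) * cos (\<theta> (j + 1) - \<theta> (i + 1)))"
  unfolding kuramoto_jac_def lapm_def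
  by (intro cong_mat refl) (auto simp: sum.atLeast1_atMost_eq)

lemma lap_one_real:
  assumes d0: "\<And>i. i < n \<Longrightarrow> W i i = 0"
  shows "lapm n W *\<^sub>v vec n (\<lambda>_. 1) = 0\<^sub>v n"
proof (rule eq_vecI)
  fix i assume "i < dim_vec (0\<^sub>v n :: real vec)"
  then have i: "i < n" by simp
  have "(lapm n W *\<^sub>v vec n (\<lambda>_. 1)) $ i = (\<Sum>j<n. if i = j then - (\<Sum>k<n. W i k) else W i j)"
    using i unfolding lapm_def mult_mat_vec_def scalar_prod_def
    by (auto simp: lessThan_atLeast0 intro!: sum.cong)
  also have "\<dots> = 0" using i d0[OF i] by (subst sum_if_eq) auto
  finally show "(lapm n W *\<^sub>v vec n (\<lambda>_. 1)) $ i = 0\<^sub>v n $ i" using i by simp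
qed (simp add: lapm_def)

lemma W_props:
  assumes nc: "nc \<ge> 5" and c: "c > 0" and C1: "cond_C1 m nc \<theta>"
  defines "W \<equiv> (\<lambda>i j. hc_adj m nc c (i + 1) (j + 1) * cos (\<theta> (j + 1) - \<theta> (i + 1)))"
  shows "\<And>i j. W i j = W j i" "\<And>i. W i i = 0" "\<And>i j. W i j \<ge> 0"
    "\<And>i. Suc i < hc_n m nc \<Longrightarrow> W i (Suc i) > 0"
proof -
  fix i j
  have cs: "cos (\<theta> (j + 1) - \<theta> (i + 1)) = cos (\<theta> (i + 1) - \<theta> (j + 1))"
    by (metis cos_minus minus_diff_eq)
  show "W i j = W j i" unfolding W_def hc_adj_def using cs by auto
  show "W i i = 0" unfolding W_def hc_adj_def hc_edge_def using nc by auto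
  show "W i j \<ge> 0"
  proof (cases "hc_edge m nc (i + 1) (j + 1) \<or> hc_edge m nc (j + 1) (i + 1)")
    case True
    then have "cos (\<theta> (j + 1) - \<theta> (i + 1)) > 0" using C1_cos_pos[OF C1] nc by force
    then show ?thesis unfolding W_def hc_adj_def using True c by simp
  qed (simp add: W_def hc_adj_def)
next
  fix i assume i: "Suc i < hc_n m nc"
  have e: "hc_edge m nc (i + 1) (Suc i + 1)" unfolding hc_edge_def using i unfolding hc_n_def by auto
  then have "cos (\<theta> (Suc i + 1) - \<theta> (i + 1)) > 0" using C1_cos_pos[OF C1 e] nc by simp
  then show "W i (Suc i) > 0" unfolding W_def hc_adj_def using e c by simp
qed

theorem theorem3p1:
  fixes m nc :: nat and c :: real and \<omega> :: "nat \<Rightarrow> real"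
  assumes "m \<ge> 1" and "nc \<ge> 5" and "c > 0"
    and "\<forall>i \<in> hc_V m nc. \<forall>j \<in> hc_V m nc. \<omega> i = \<omega> j"
  shows "int (card (hc_configs m nc // rot_rel m nc)) = (2 * \<lceil>real nc / 4\<rceil> - 1) ^ m
    \<and> (\<forall>\<theta> \<in> hc_configs m nc.
         phase_locked m nc c \<omega> \<theta>
       \<and> kuramoto_jac m nc c \<theta> *\<^sub>v vec (hc_n m nc) (\<lambda>_. 1) = 0\<^sub>v (hc_n m nc)
       \<and> order 0 (char_poly (map_mat complex_of_real (kuramoto_jac m nc c \<theta>))) = 1
       \<and> (\<forall>ev. eigenvalue (map_mat complex_of_real (kuramoto_jac m nc c \<theta>)) ev \<longrightarrow>
              ev = 0 \<or> (Im ev = 0 \<and> Re ev < 0)))"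
proof -
  let ?n = "hc_n m nc"
  have nc: "nc \<ge> 5" and c: "c > 0" using assms by auto
  have part1: "int (card (hc_configs m nc // rot_rel m nc)) = (2 * \<lceil>real nc / 4\<rceil> - 1) ^ m"
    by (rule card_quot[OF nc])
  have part2: "phase_locked m nc c \<omega> \<theta>
       \<and> kuramoto_jac m nc c \<theta> *\<^sub>v vec (hc_n m nc) (\<lambda>_. 1) = 0\<^sub>v (hc_n m nc)
       \<and> order 0 (char_poly (map_mat complex_of_real (kuramoto_jac m nc c \<theta>))) = 1
       \<and> (\<forall>ev. eigenvalue (map_mat complex_of_real (kuramoto_jac m nc c \<theta>)) ev \<longrightarrow>
              ev = 0 \<or> (Im ev = 0 \<and> Re ev < 0))" if th: "\<theta> \<in> hc_configs m nc" for \<theta>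
  proof -
    have C1: "cond_C1 m nc \<theta>" using th unfolding hc_configs_def by simp
    define W where "W = (\<lambda>i j. hc_adj m nc c (i + 1) (j + 1) * cos (\<theta> (j + 1) - \<theta> (i + 1)))"
    have WP1: "\<And>i j. W i j = W j i" unfolding W_def by (rule W_props(1)[OF nc c C1])
    have WP2: "\<And>i. W i i = 0" unfolding W_def by (rule W_props(2)[OF nc c C1])
    have WP3: "\<And>i j. W i j \<ge> 0" unfolding W_def by (rule W_props(3)[OF nc c C1])
    have WP4: "\<And>i. Suc i < ?n \<Longrightarrow> W i (Suc i) > 0" unfolding W_def by (rule W_props(4)[OF nc c C1])
    note WP = WP1 WP2 WP3 WP4
    have J: "kuramoto_jac m nc c \<theta> = lapm ?n W" unfolding W_def by (rule jac_lapm)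
    obtain k where k: "k \<in> KS m nc" "(\<theta>, cfg nc k) \<in> rot_rel m nc" using configs_rep[OF nc th] by blast
    then obtain r where r: "\<forall>i\<in>hc_V m nc. cong_2pi (\<theta> i) (cfg nc k i + r)" unfolding rot_rel_def by blast
    have rhs: "kuramoto_rhs m nc c \<omega> \<theta> i = \<omega> i" if i: "i \<in> hc_V m nc" for i
    proof -
      have "(\<Sum>j = 1 .. ?n. hc_adj m nc c i j * sin (\<theta> j - \<theta> i))
          = (\<Sum>j = 1 .. ?n. hc_adj m nc c i j * sin (cfg nc k j - cfg nc k i))"
      proof (rule sum.cong[OF refl])
        fix j assume "j \<in> {1 .. ?n}"
        then have j: "j \<in> hc_V m nc" unfolding hc_V_def .
        have "cong_2pi (\<theta> j - \<theta> i) ((cfg nc k j + r) - (cfg nc k i + r))"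
          using r i j cong_diff by blast
        then have "sin (\<theta> j - \<theta> i) = sin (cfg nc k j - cfg nc k i)" using cong_sin by simp
        then show "hc_adj m nc c i j * sin (\<theta> j - \<theta> i) = hc_adj m nc c i j * sin (cfg nc k j - cfg nc k i)"
          by simp
      qed
      also have "\<dots> = 0" using i unfolding hc_V_def by (intro cfg_balance[OF nc]) auto
      finally show ?thesis unfolding kuramoto_rhs_def by simp
    qed
    have PL: "phase_locked m nc c \<omega> \<theta>" unfolding phase_locked_def
    proof (intro ballI)
      fix i j assume i: "i \<in> hc_V m nc" and j: "j \<in> hc_V m nc"
      have "\<omega> i = \<omega> j" using assms(4) i j by blast
      then show "kuramoto_rhs m nc c \<omega> \<theta> i = kuramoto_rhs m nc c \<omega> \<theta> j"
        by (simp only: rhs[OF i] rhs[OF j])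
    qed
    have Jv: "kuramoto_jac m nc c \<theta> *\<^sub>v vec ?n (\<lambda>_. 1) = 0\<^sub>v ?n"
      unfolding J by (rule lap_one_real) (simp add: WP(2))
    let ?A = "map_mat complex_of_real (lapm ?n W)"
    have Lc: "lapm ?n W \<in> carrier_mat ?n ?n" unfolding lapm_def by simp
    have Ac: "?A \<in> carrier_mat ?n ?n" unfolding lapm_def by simp
    have Lsym: "lapm ?n W $$ (i, j) = lapm ?n W $$ (j, i)" if "i < ?n" "j < ?n" for i j
      using that WP(1) unfolding lapm_def by auto
    define w where "w = vec ?n (\<lambda>_. 1 :: complex)"
    have wc: "w \<in> carrier_vec ?n" unfolding w_def by simp
    have wnz: "w \<noteq> 0\<^sub>v ?n"
    proof
      assume "w = 0\<^sub>v ?n"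
      then have "w $ 0 = 0\<^sub>v ?n $ 0" by simp
      moreover have "0 < ?n" unfolding hc_n_def by simp
      ultimately show False unfolding w_def by simp
    qed
    have Aw: "?A *\<^sub>v w = 0\<^sub>v ?n"
    proof (rule eq_vecI)
      fix i assume "i < dim_vec (0\<^sub>v ?n :: complex vec)"
      then have i: "i < ?n" by simp
      have "(?A *\<^sub>v w) $ i = (\<Sum>j<?n. of_real (W i j) * (w$j - w$i))"
        by (rule lap_mult_vec[OF wc i WP(2)])
      also have "\<dots> = 0" using i unfolding w_def by (auto intro!: sum.neutral)
      finally show "(?A *\<^sub>v w) $ i = 0\<^sub>v ?n $ i" using i by simp
    qed (simp add: lapm_def)
    have ord: "order 0 (char_poly ?A) = 1"
    proof (rule order_zero_one[OF Ac _ _ wc wnz Aw])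
      fix v :: "complex vec" assume v: "v \<in> carrier_vec ?n" "?A *\<^sub>v (?A *\<^sub>v v) = 0\<^sub>v ?n"
      show "?A *\<^sub>v v = 0\<^sub>v ?n" using sym_sq_kernel[of "lapm ?n W" ?n v] Lc Lsym v by blast
    next
      fix v :: "complex vec" assume v: "v \<in> carrier_vec ?n" "?A *\<^sub>v v = 0\<^sub>v ?n"
      have "v = (v $ 0) \<cdot>\<^sub>v vec ?n (\<lambda>_. 1)"
        by (rule lap_kernel[OF _ _ _ _ v]) (use WP in auto)
      then show "\<exists>a. v = a \<cdot>\<^sub>v w" unfolding w_def by blast
    qed
    have ev: "\<forall>ev. eigenvalue ?A ev \<longrightarrow> ev = 0 \<or> (Im ev = 0 \<and> Re ev < 0)"
      using lap_eigen[of ?n W] WP by blast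
    show ?thesis using PL Jv ord ev unfolding J by simp
  qed
  show ?thesis using part1 part2 by blast
qed

end
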